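(* Let $\mathcal{C}$ be an assembler satisfying (S), (Ep), (D) with sink $S$, and let $U$ be a noninitial object of $\mathcal{C}$. Let $\mathcal{C}_U$ be the full subcategory of $\mathcal{C}$ on those objects $A$ with $\mathrm{Hom}_{\mathcal{C}}(A,U)\neq\emptyset$. Let $\mathcal{F}=\{f_A:A\to S\}$ be a family of morphisms to the sink of $\mathcal{C}$ (with $f_S=1_S$) and let $\mathcal{F}'=\{f'_A:A\to U\}_{A\in\mathcal{C}_U}$ be a family of morphisms to $U$ in $\mathcal{C}_U$ (with $f'_U=1_U$) satisfying $f_A=f_Uf'_A$ for all $A$ in $\mathcal{C}_U$. Let $G$ and $G'$ be the groups associated to $\mathcal{C}$ (with sink $S$) and $\mathcal{C}_U$ (with sink $U$) respectively. Then there exists a group isomorphism $\varphi:G'\to G$ such that $\pi_{\mathcal{F}}\circ j=\varphi_*\circ\pi_{\mathcal{F}'}$ as functors $\mathcal{C}_U\to\mathcal{S}_G$, where $j:\mathcal{C}_U\to\mathcal{C}$ is the inclusion and $\varphi_*:\mathcal{S}_{G'}\to\mathcal{S}_G$ is induced by $\varphi$.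
   Context: An assembler is a small category with a Grothendieck topology satisfying: (I) there is an initial object $\varnothing$ covered by the empty family; (R) any two finite disjoint covering families of an object have a common refinement which is a finite disjoint covering family; (M) all morphisms are monomorphisms. Maps $A\to C$, $B\to C$ are disjoint if $A\times_CB$ exists and is initial. Conditions: (S) there is an object $S$ (the sink) with $\mathcal{C}(A,S)\neq\emptyset$ for all $A$; (Ep) all morphisms with noninitial domain are epimorphisms and every family $\{A\to B\}$ with $A\ne\varnothing$ is covering; (D) for $A,B\neq\varnothing$ no two morphisms $A\to C$, $B\to C$ are disjoint. For such an assembler with sink $S$, the group $G$ consists of classes $[S\xleftarrow{f_1}A\xrightarrow{f_2}S]$ with $A$ noninitial, modulo the equivalence relation generated by $[A;f_1,f_2]\sim[B;g_1,g_2]$ when there are $h:C\to A$, $k:C\to B$ with $f_1h=g_1k$, $f_2h=g_2k$; the product is $[A;f_1,f_2]\cdot[B;g_1,g_2]=[X;f_1g_1',g_2f_2']$ for any noninitial $X$ with $g_1':X\to A$, $f_2':X\to B$, $f_2g_1'=g_1f_2'$. $\mathcal{S}_G$ is the assembler with objects $\varnothing,*$, one morphism $\varnothing\to *$, $\mathrm{Aut}( * )=G$, and a homomorphism of groups induces a morphism between such assemblers. For a family $\mathcal{F}=\{f_A:A\to S\}$, $\pi_{\mathcal{F}}$ sends noninitial objects to $*$ and $g:A\to B$ to $[A;f_A,f_Bg]$. *)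

theory Defs
  imports "HOL-Algebra.Group"
begin

text \<open>A small category: a set of objects, a set of arrows, domain, codomain,
  composition (Cmp g f means g after f) and identities.\<close>

record ('o, 'm) cat =
  Obj :: "'o set"
  Arr :: "'m set"
  Dom :: "'m \<Rightarrow> 'o"
  Cod :: "'m \<Rightarrow> 'o"
  Cmp :: "'m \<Rightarrow> 'm \<Rightarrow> 'm"
  Id  :: "'o \<Rightarrow> 'm"

definition homs :: "('o,'m) cat \<Rightarrow> 'o \<Rightarrow> 'o \<Rightarrow> 'm set" where
  "homs C A B = {f \<in> Arr C. Dom C f = A \<and> Cod C f = B}"

definition category :: "('o,'m) cat \<Rightarrow> bool" where
  "category C \<longleftrightarrow>
     (\<forall>f\<in>Arr C. Dom C f \<in> Obj C \<and> Cod C f \<in> Obj C) \<and>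
     (\<forall>A\<in>Obj C. Id C A \<in> homs C A A) \<and>
     (\<forall>f\<in>Arr C. \<forall>g\<in>Arr C. Cod C f = Dom C g \<longrightarrow>
        Cmp C g f \<in> Arr C \<and> Dom C (Cmp C g f) = Dom C f \<and> Cod C (Cmp C g f) = Cod C g) \<and>
     (\<forall>f\<in>Arr C. \<forall>g\<in>Arr C. \<forall>h\<in>Arr C. Cod C f = Dom C g \<and> Cod C g = Dom C h \<longrightarrow>
        Cmp C h (Cmp C g f) = Cmp C (Cmp C h g) f) \<and>
     (\<forall>f\<in>Arr C. Cmp C f (Id C (Dom C f)) = f \<and> Cmp C (Id C (Cod C f)) f = f)"

definition initial :: "('o,'m) cat \<Rightarrow> 'o \<Rightarrow> bool" where
  "initial C A \<longleftrightarrow> A \<in> Obj C \<and> (\<forall>B\<in>Obj C. \<exists>!f. f \<in> homs C A B)"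

definition mono :: "('o,'m) cat \<Rightarrow> 'm \<Rightarrow> bool" where
  "mono C f \<longleftrightarrow> (\<forall>g\<in>Arr C. \<forall>h\<in>Arr C. Cod C g = Dom C f \<and> Cod C h = Dom C f \<and>
      Dom C g = Dom C h \<and> Cmp C f g = Cmp C f h \<longrightarrow> g = h)"

definition epi :: "('o,'m) cat \<Rightarrow> 'm \<Rightarrow> bool" where
  "epi C f \<longleftrightarrow> (\<forall>g\<in>Arr C. \<forall>h\<in>Arr C. Dom C g = Cod C f \<and> Dom C h = Cod C f \<and>
      Cod C g = Cod C h \<and> Cmp C g f = Cmp C h f \<longrightarrow> g = h)"

definition is_pullback :: "('o,'m) cat \<Rightarrow> 'm \<Rightarrow> 'm \<Rightarrow> 'o \<Rightarrow> 'm \<Rightarrow> 'm \<Rightarrow> bool" where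
  "is_pullback C f g P p1 p2 \<longleftrightarrow>
     P \<in> Obj C \<and> p1 \<in> homs C P (Dom C f) \<and> p2 \<in> homs C P (Dom C g) \<and>
     Cmp C f p1 = Cmp C g p2 \<and>
     (\<forall>X\<in>Obj C. \<forall>x1 x2. x1 \<in> homs C X (Dom C f) \<and> x2 \<in> homs C X (Dom C g) \<and>
        Cmp C f x1 = Cmp C g x2 \<longrightarrow>
        (\<exists>!u. u \<in> homs C X P \<and> Cmp C p1 u = x1 \<and> Cmp C p2 u = x2))"

definition disjoint_maps :: "('o,'m) cat \<Rightarrow> 'm \<Rightarrow> 'm \<Rightarrow> bool" where
  "disjoint_maps C f g \<longleftrightarrow> f \<in> Arr C \<and> g \<in> Arr C \<and> Cod C f = Cod C g \<and>
     (\<exists>P p1 p2. is_pullback C f g P p1 p2 \<and> initial C P)"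

definition sieve :: "('o,'m) cat \<Rightarrow> 'o \<Rightarrow> 'm set \<Rightarrow> bool" where
  "sieve C A R \<longleftrightarrow> R \<subseteq> {f \<in> Arr C. Cod C f = A} \<and>
     (\<forall>f\<in>R. \<forall>g\<in>Arr C. Cod C g = Dom C f \<longrightarrow> Cmp C f g \<in> R)"

definition pb_sieve :: "('o,'m) cat \<Rightarrow> 'm \<Rightarrow> 'm set \<Rightarrow> 'm set" where
  "pb_sieve C f R = {g \<in> Arr C. Cod C g = Dom C f \<and> Cmp C f g \<in> R}"

definition grothendieck_topology :: "('o,'m) cat \<Rightarrow> ('o \<Rightarrow> 'm set set) \<Rightarrow> bool" where
  "grothendieck_topology C Cov \<longleftrightarrow>
     (\<forall>A\<in>Obj C. \<forall>R\<in>Cov A. sieve C A R) \<and>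
     (\<forall>A\<in>Obj C. {f \<in> Arr C. Cod C f = A} \<in> Cov A) \<and>
     (\<forall>A\<in>Obj C. \<forall>R\<in>Cov A. \<forall>f\<in>Arr C. Cod C f = A \<longrightarrow> pb_sieve C f R \<in> Cov (Dom C f)) \<and>
     (\<forall>A\<in>Obj C. \<forall>R\<in>Cov A. \<forall>R'. sieve C A R' \<and> (\<forall>f\<in>R. pb_sieve C f R' \<in> Cov (Dom C f))
        \<longrightarrow> R' \<in> Cov A)"

definition gen_sieve :: "('o,'m) cat \<Rightarrow> 'm set \<Rightarrow> 'm set" where
  "gen_sieve C F = {Cmp C f g | f g. f \<in> F \<and> g \<in> Arr C \<and> Cod C g = Dom C f}"

definition covering :: "('o,'m) cat \<Rightarrow> ('o \<Rightarrow> 'm set set) \<Rightarrow> 'o \<Rightarrow> 'm set \<Rightarrow> bool" where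
  "covering C Cov A F \<longleftrightarrow> F \<subseteq> {f \<in> Arr C. Cod C f = A} \<and> gen_sieve C F \<in> Cov A"

definition fin_disj_cov :: "('o,'m) cat \<Rightarrow> ('o \<Rightarrow> 'm set set) \<Rightarrow> 'o \<Rightarrow> 'm set \<Rightarrow> bool" where
  "fin_disj_cov C Cov A F \<longleftrightarrow> finite F \<and> covering C Cov A F \<and>
     (\<forall>f\<in>F. \<forall>g\<in>F. f \<noteq> g \<longrightarrow> disjoint_maps C f g)"

definition refines :: "('o,'m) cat \<Rightarrow> 'm set \<Rightarrow> 'm set \<Rightarrow> bool" where
  "refines C F' F \<longleftrightarrow> (\<forall>g\<in>F'. \<exists>f\<in>F. \<exists>h\<in>Arr C. Cod C h = Dom C f \<and> g = Cmp C f h)"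

definition assembler :: "('o,'m) cat \<Rightarrow> ('o \<Rightarrow> 'm set set) \<Rightarrow> bool" where
  "assembler C Cov \<longleftrightarrow>
     category C \<and> grothendieck_topology C Cov \<and>
     \<comment> \<open>(I)\<close>
     (\<exists>E. initial C E \<and> covering C Cov E {}) \<and>
     \<comment> \<open>(R)\<close>
     (\<forall>A\<in>Obj C. \<forall>F1 F2. fin_disj_cov C Cov A F1 \<and> fin_disj_cov C Cov A F2 \<longrightarrow>
        (\<exists>F3. fin_disj_cov C Cov A F3 \<and> refines C F3 F1 \<and> refines C F3 F2)) \<and>
     \<comment> \<open>(M)\<close>
     (\<forall>f\<in>Arr C. mono C f)"

definition is_sink :: "('o,'m) cat \<Rightarrow> 'o \<Rightarrow> bool" where
  "is_sink C S \<longleftrightarrow> S \<in> Obj C \<and> (\<forall>A\<in>Obj C. homs C A S \<noteq> {})"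

definition cond_Ep :: "('o,'m) cat \<Rightarrow> ('o \<Rightarrow> 'm set set) \<Rightarrow> bool" where
  "cond_Ep C Cov \<longleftrightarrow>
     (\<forall>f\<in>Arr C. \<not> initial C (Dom C f) \<longrightarrow> epi C f) \<and>
     (\<forall>f\<in>Arr C. \<not> initial C (Dom C f) \<longrightarrow> covering C Cov (Cod C f) {f})"

definition cond_D :: "('o,'m) cat \<Rightarrow> bool" where
  "cond_D C \<longleftrightarrow> (\<forall>f\<in>Arr C. \<forall>g\<in>Arr C. \<not> initial C (Dom C f) \<and> \<not> initial C (Dom C g)
       \<and> Cod C f = Cod C g \<longrightarrow> \<not> disjoint_maps C f g)"

definition full_sub :: "('o,'m) cat \<Rightarrow> 'o \<Rightarrow> ('o,'m) cat" where
  "full_sub C U = C\<lparr>Obj := {A \<in> Obj C. homs C A U \<noteq> {}},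
                     Arr := {f \<in> Arr C. homs C (Dom C f) U \<noteq> {} \<and> homs C (Cod C f) U \<noteq> {}}\<rparr>"

text \<open>Spans S <- A -> S with A noninitial, represented by the pair of legs.\<close>
definition gT :: "('o,'m) cat \<Rightarrow> 'o \<Rightarrow> ('m \<times> 'm) set" where
  "gT C S = {(f1, f2). f1 \<in> Arr C \<and> f2 \<in> Arr C \<and> Dom C f1 = Dom C f2 \<and>
     Cod C f1 = S \<and> Cod C f2 = S \<and> \<not> initial C (Dom C f1)}"

definition gR :: "('o,'m) cat \<Rightarrow> 'o \<Rightarrow> (('m \<times> 'm) \<times> ('m \<times> 'm)) set" where
  "gR C S = {((f1, f2), (g1, g2)). (f1, f2) \<in> gT C S \<and> (g1, g2) \<in> gT C S \<and>
     (\<exists>h k. h \<in> Arr C \<and> k \<in> Arr C \<and> Dom C h = Dom C k \<and> \<not> initial C (Dom C h) \<and>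
        Cod C h = Dom C f1 \<and> Cod C k = Dom C g1 \<and>
        Cmp C f1 h = Cmp C g1 k \<and> Cmp C f2 h = Cmp C g2 k)}"

definition gE :: "('o,'m) cat \<Rightarrow> 'o \<Rightarrow> (('m \<times> 'm) \<times> ('m \<times> 'm)) set" where
  "gE C S = Restr ((gR C S \<union> (gR C S)\<inverse>)\<^sup>*) (gT C S)"

definition gclass :: "('o,'m) cat \<Rightarrow> 'o \<Rightarrow> 'm \<times> 'm \<Rightarrow> ('m \<times> 'm) set" where
  "gclass C S p = gE C S `` {p}"

definition gmult :: "('o,'m) cat \<Rightarrow> 'o \<Rightarrow> ('m \<times> 'm) set \<Rightarrow> ('m \<times> 'm) set \<Rightarrow> ('m \<times> 'm) set" where
  "gmult C S x y = (SOME z. \<exists>f1 f2 g1 g2 u v. (f1, f2) \<in> x \<and> (g1, g2) \<in> y \<and>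
      u \<in> Arr C \<and> v \<in> Arr C \<and> Dom C u = Dom C v \<and> \<not> initial C (Dom C u) \<and>
      Cod C u = Dom C f1 \<and> Cod C v = Dom C g1 \<and> Cmp C f2 u = Cmp C g1 v \<and>
      z = gclass C S (Cmp C f1 u, Cmp C g2 v))"

definition group_of :: "('o,'m) cat \<Rightarrow> 'o \<Rightarrow> ('m \<times> 'm) set monoid" where
  "group_of C S = \<lparr>carrier = gT C S // gE C S, mult = gmult C S,
                   one = gclass C S (Id C S, Id C S)\<rparr>"

datatype sg_obj = SG_empty | SG_star

text \<open>Morphisms of S_G: identity of the empty object, the unique map empty -> *,
  and the automorphisms of * (elements of G; the identity of * is the unit of G).\<close>
datatype 'g sg_mor = SG_id_empty | SG_to_star | SG_aut 'g

definition sg_map :: "('a \<Rightarrow> 'b) \<Rightarrow> 'a sg_mor \<Rightarrow> 'b sg_mor" where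
  "sg_map \<phi> m = (case m of SG_id_empty \<Rightarrow> SG_id_empty | SG_to_star \<Rightarrow> SG_to_star
                   | SG_aut a \<Rightarrow> SG_aut (\<phi> a))"

definition pi_ob :: "('o,'m) cat \<Rightarrow> 'o \<Rightarrow> sg_obj" where
  "pi_ob C A = (if initial C A then SG_empty else SG_star)"

definition pi_mor :: "('o,'m) cat \<Rightarrow> 'o \<Rightarrow> ('o \<Rightarrow> 'm) \<Rightarrow> 'm \<Rightarrow> ('m \<times> 'm) set sg_mor" where
  "pi_mor C S F g =
     (if initial C (Dom C g) then (if initial C (Cod C g) then SG_id_empty else SG_to_star)
      else SG_aut (gclass C S (F (Dom C g), Cmp C (F (Cod C g)) g)))"

end

theory Submission
  imports Defs
begin
lemma cat_comp:
  assumes "category C" "f \<in> Arr C" "g \<in> Arr C" "Cod C f = Dom C g"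
  shows "Cmp C g f \<in> Arr C" "Dom C (Cmp C g f) = Dom C f" "Cod C (Cmp C g f) = Cod C g"
  using assms unfolding category_def by auto

lemma cat_assoc:
  assumes "category C" "f \<in> Arr C" "g \<in> Arr C" "h \<in> Arr C" "Cod C f = Dom C g" "Cod C g = Dom C h"
  shows "Cmp C (Cmp C h g) f = Cmp C h (Cmp C g f)"
  using assms unfolding category_def by metis

lemma cat_id:
  assumes "category C" "A \<in> Obj C"
  shows "Id C A \<in> Arr C" "Dom C (Id C A) = A" "Cod C (Id C A) = A"
  using assms unfolding category_def homs_def by auto

lemma cat_idr:
  assumes "category C" "f \<in> Arr C" "Dom C f = A"
  shows "Cmp C f (Id C A) = f"
  using assms unfolding category_def by auto

lemma cat_idl:
  assumes "category C" "f \<in> Arr C" "Cod C f = A"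
  shows "Cmp C (Id C A) f = f"
  using assms unfolding category_def by auto

lemma cat_dom_obj:
  assumes "category C" "f \<in> Arr C"
  shows "Dom C f \<in> Obj C" "Cod C f \<in> Obj C"
  using assms unfolding category_def by auto

definition ore :: "('o,'m) cat \<Rightarrow> bool" where
  "ore C \<longleftrightarrow> (\<forall>a\<in>Arr C. \<forall>b\<in>Arr C. Cod C a = Cod C b \<and> \<not> initial C (Dom C a) \<and> \<not> initial C (Dom C b)
     \<longrightarrow> (\<exists>p q. p \<in> Arr C \<and> q \<in> Arr C \<and> Dom C p = Dom C q \<and> \<not> initial C (Dom C p) \<and>
          Cod C p = Dom C a \<and> Cod C q = Dom C b \<and> Cmp C a p = Cmp C b q))"

lemma oreE:
  assumes "ore C" "a \<in> Arr C" "b \<in> Arr C" "Cod C a = Cod C b" "\<not> initial C (Dom C a)" "\<not> initial C (Dom C b)"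
  obtains p q where "p \<in> Arr C" "q \<in> Arr C" "Dom C p = Dom C q" "\<not> initial C (Dom C p)"
     "Cod C p = Dom C a" "Cod C q = Dom C b" "Cmp C a p = Cmp C b q"
  using assms unfolding ore_def by blast

lemma ore_from_D:
  assumes cat: "category C" and E: "initial C E" and D: "cond_D C"
  shows "ore C"
  unfolding ore_def
proof (intro ballI impI)
  fix a b assume ab: "a \<in> Arr C" "b \<in> Arr C"
    and h: "Cod C a = Cod C b \<and> \<not> initial C (Dom C a) \<and> \<not> initial C (Dom C b)"
  show "\<exists>p q. p \<in> Arr C \<and> q \<in> Arr C \<and> Dom C p = Dom C q \<and> \<not> initial C (Dom C p) \<and>
          Cod C p = Dom C a \<and> Cod C q = Dom C b \<and> Cmp C a p = Cmp C b q"
  proof (rule ccontr)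
    assume nc: "\<not> ?thesis"
    have Eo: "E \<in> Obj C" using E unfolding initial_def by auto
    have da: "Dom C a \<in> Obj C" using cat_dom_obj[OF cat] ab by blast
    have db: "Dom C b \<in> Obj C" using cat_dom_obj[OF cat] ab by blast
    have ca: "Cod C a \<in> Obj C" using cat_dom_obj[OF cat] ab by blast
    obtain pa where pa: "pa \<in> homs C E (Dom C a)" using E da unfolding initial_def by blast
    obtain pb where pb: "pb \<in> homs C E (Dom C b)" using E db unfolding initial_def by blast
    have "Cmp C a pa \<in> homs C E (Cod C a)" "Cmp C b pb \<in> homs C E (Cod C a)"
      using pa pb ab h cat_comp[OF cat] unfolding homs_def by auto
    then have eq: "Cmp C a pa = Cmp C b pb" using E ca unfolding initial_def by blast
    have pb_: "is_pullback C a b E pa pb"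
      unfolding is_pullback_def
    proof (intro conjI ballI allI impI)
      show "E \<in> Obj C" by (fact Eo)
      show "pa \<in> homs C E (Dom C a)" by (fact pa)
      show "pb \<in> homs C E (Dom C b)" by (fact pb)
      show "Cmp C a pa = Cmp C b pb" by (fact eq)
      fix X x1 x2 assume X: "X \<in> Obj C"
        and x: "x1 \<in> homs C X (Dom C a) \<and> x2 \<in> homs C X (Dom C b) \<and> Cmp C a x1 = Cmp C b x2"
      have XI: "initial C X"
      proof (rule ccontr)
        assume "\<not> initial C X"
        moreover have "x1 \<in> Arr C" "x2 \<in> Arr C" "Dom C x1 = X" "Dom C x2 = X"
          "Cod C x1 = Dom C a" "Cod C x2 = Dom C b" "Cmp C a x1 = Cmp C b x2"
          using x unfolding homs_def by auto
        ultimately show False using nc by metis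
      qed
      obtain u where u: "u \<in> homs C X E" using XI Eo unfolding initial_def by blast
      have "Cmp C pa u \<in> homs C X (Dom C a)" "Cmp C pb u \<in> homs C X (Dom C b)"
        using u pa pb cat_comp[OF cat] unfolding homs_def by auto
      then have "Cmp C pa u = x1" "Cmp C pb u = x2" using XI da db x unfolding initial_def by blast+
      then show "\<exists>!u. u \<in> homs C X E \<and> Cmp C pa u = x1 \<and> Cmp C pb u = x2"
        using u XI Eo unfolding initial_def by blast
    qed
    have "disjoint_maps C a b" unfolding disjoint_maps_def using ab h pb_ E by blast
    then show False using D ab h unfolding cond_D_def by blast
  qed
qed

lemma gR_I:
  assumes "(f1,f2) \<in> gT C S" "(g1,g2) \<in> gT C S" "h \<in> Arr C" "k \<in> Arr C" "Dom C h = Dom C k"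
    "\<not> initial C (Dom C h)" "Cod C h = Dom C f1" "Cod C k = Dom C g1"
    "Cmp C f1 h = Cmp C g1 k" "Cmp C f2 h = Cmp C g2 k"
  shows "((f1,f2),(g1,g2)) \<in> gR C S"
  unfolding gR_def using assms by blast

lemma gT_I:
  assumes "f1 \<in> Arr C" "f2 \<in> Arr C" "Dom C f1 = Dom C f2" "Cod C f1 = S" "Cod C f2 = S"
    "\<not> initial C (Dom C f1)"
  shows "(f1, f2) \<in> gT C S"
  unfolding gT_def using assms by blast

lemma gT_D:
  assumes "(f1, f2) \<in> gT C S"
  shows "f1 \<in> Arr C" "f2 \<in> Arr C" "Dom C f1 = Dom C f2" "Cod C f1 = S" "Cod C f2 = S"
    "\<not> initial C (Dom C f1)"
  using assms unfolding gT_def by auto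

lemma gR_T: "gR C S \<subseteq> gT C S \<times> gT C S"
  unfolding gR_def by auto

lemma gE_equiv: "equiv (gT C S) (gE C S)"
proof -
  let ?R = "gR C S \<union> (gR C S)\<inverse>"
  have s: "sym (?R\<^sup>*)" by (simp add: sym_Un_converse sym_rtrancl)
  have t: "trans (?R\<^sup>*)" by (rule trans_rtrancl)
  have sT: "sym (gT C S \<times> gT C S)" unfolding sym_def by simp
  have tT: "trans (gT C S \<times> gT C S)" unfolding trans_def by simp
  show ?thesis
    unfolding gE_def equiv_def
  proof (intro conjI)
    show "Restr (?R\<^sup>*) (gT C S) \<subseteq> gT C S \<times> gT C S" by (rule Int_lower2)
    show "refl_on (gT C S) (Restr (?R\<^sup>*) (gT C S))"
      by (rule refl_onI) simp
    show "sym (Restr (?R\<^sup>*) (gT C S))"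
      by (rule sym_Int[OF s sT])
    show "trans (Restr (?R\<^sup>*) (gT C S))"
      by (rule trans_Int[OF t tT])
  qed
qed

lemma gclass_eq:
  assumes "(p, q) \<in> gE C S" shows "gclass C S p = gclass C S q"
  unfolding gclass_def using equiv_class_eq[OF gE_equiv assms] .

lemma gR_gE: assumes "(p, q) \<in> gR C S" shows "(p, q) \<in> gE C S"
proof -
  have "(p, q) \<in> (gR C S \<union> (gR C S)\<inverse>)\<^sup>*" using assms by (intro r_into_rtrancl) simp
  moreover have "p \<in> gT C S" using assms gR_T[of C S] by auto
  moreover have "q \<in> gT C S" using assms gR_T[of C S] by auto
  ultimately show ?thesis unfolding gE_def by blast
qed

lemma gR_sym: assumes "(p, q) \<in> gR C S" shows "(q, p) \<in> gR C S"
proof -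
  obtain f1 f2 where pp: "p = (f1, f2)" by (cases p)
  obtain g1 g2 where qq: "q = (g1, g2)" by (cases q)
  obtain h k where hk: "(f1,f2) \<in> gT C S" "(g1,g2) \<in> gT C S" "h \<in> Arr C" "k \<in> Arr C" "Dom C h = Dom C k" "\<not> initial C (Dom C h)"
        "Cod C h = Dom C f1" "Cod C k = Dom C g1" "Cmp C f1 h = Cmp C g1 k" "Cmp C f2 h = Cmp C g2 k"
    using assms pp qq unfolding gR_def by auto
  have "\<not> initial C (Dom C k)" using hk by simp
  then show ?thesis unfolding pp qq using hk
    by (intro gR_I[where h=k and k=h]) auto
qed

lemma gR_refl:
  assumes cat: "category C" and p: "p \<in> gT C S"
  shows "(p, p) \<in> gR C S"
proof -
  obtain f1 f2 where pp: "p = (f1, f2)" by (cases p)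
  have a: "f1 \<in> Arr C" "f2 \<in> Arr C" "Dom C f1 = Dom C f2" "\<not> initial C (Dom C f1)"
    using p pp unfolding gT_def by auto
  have o: "Dom C f1 \<in> Obj C" using cat_dom_obj(1)[OF cat a(1)] .
  show ?thesis unfolding pp
    using p pp a cat_id[OF cat o] cat_idr[OF cat a(1)] cat_idr[OF cat a(2)]
    by (intro gR_I[where h="Id C (Dom C f1)" and k="Id C (Dom C f1)"]) auto
qed

lemma gR_trans:
  assumes cat: "category C" and ore: "ore C"
    and pq: "(p, q) \<in> gR C S" and qr: "(q, r) \<in> gR C S"
  shows "(p, r) \<in> gR C S"
proof -
  obtain f1 f2 where pp: "p = (f1, f2)" by (cases p)
  obtain g1 g2 where qq: "q = (g1, g2)" by (cases q)
  obtain e1 e2 where rr: "r = (e1, e2)" by (cases r)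
  have T: "(f1,f2) \<in> gT C S" "(g1,g2) \<in> gT C S" "(e1,e2) \<in> gT C S"
    using pq qr pp qq rr unfolding gR_def by auto
  obtain h k where hk: "h \<in> Arr C" "k \<in> Arr C" "Dom C h = Dom C k" "\<not> initial C (Dom C h)"
        "Cod C h = Dom C f1" "Cod C k = Dom C g1" "Cmp C f1 h = Cmp C g1 k" "Cmp C f2 h = Cmp C g2 k"
    using pq pp qq unfolding gR_def by auto
  obtain h' k' where hk': "h' \<in> Arr C" "k' \<in> Arr C" "Dom C h' = Dom C k'" "\<not> initial C (Dom C h')"
        "Cod C h' = Dom C g1" "Cod C k' = Dom C e1" "Cmp C g1 h' = Cmp C e1 k'" "Cmp C g2 h' = Cmp C e2 k'"
    using qr qq rr unfolding gR_def by auto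
  have T': "f1 \<in> Arr C" "f2 \<in> Arr C" "Dom C f1 = Dom C f2" "g1 \<in> Arr C" "g2 \<in> Arr C" "Dom C g1 = Dom C g2"
     "e1 \<in> Arr C" "e2 \<in> Arr C" "Dom C e1 = Dom C e2"
    using T unfolding gT_def by auto
  obtain a b where ab: "a \<in> Arr C" "b \<in> Arr C" "Dom C a = Dom C b" "\<not> initial C (Dom C a)"
     "Cod C a = Dom C k" "Cod C b = Dom C h'" "Cmp C k a = Cmp C h' b"
    using oreE[OF ore hk(2) hk'(1)] hk hk' by metis
  have c1: "Cmp C h a \<in> Arr C" "Dom C (Cmp C h a) = Dom C a" "Cod C (Cmp C h a) = Dom C f1"
    using cat_comp[OF cat ab(1) hk(1)] ab hk by auto
  have c2: "Cmp C k' b \<in> Arr C" "Dom C (Cmp C k' b) = Dom C a" "Cod C (Cmp C k' b) = Dom C e1"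
    using cat_comp[OF cat ab(2) hk'(2)] ab hk' by auto
  have e1: "Cmp C f1 (Cmp C h a) = Cmp C e1 (Cmp C k' b)"
  proof -
    have "Cmp C f1 (Cmp C h a) = Cmp C (Cmp C f1 h) a"
      using cat_assoc[OF cat ab(1) hk(1) T'(1)] ab hk by auto
    also have "\<dots> = Cmp C (Cmp C g1 k) a" using hk by simp
    also have "\<dots> = Cmp C g1 (Cmp C k a)"
      using cat_assoc[OF cat ab(1) hk(2) T'(4)] ab hk by auto
    also have "\<dots> = Cmp C g1 (Cmp C h' b)" using ab by simp
    also have "\<dots> = Cmp C (Cmp C g1 h') b"
      using cat_assoc[OF cat ab(2) hk'(1) T'(4)] ab hk' by auto
    also have "\<dots> = Cmp C (Cmp C e1 k') b" using hk' by simp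
    also have "\<dots> = Cmp C e1 (Cmp C k' b)"
      using cat_assoc[OF cat ab(2) hk'(2) T'(7)] ab hk' by auto
    finally show ?thesis .
  qed
  have e2: "Cmp C f2 (Cmp C h a) = Cmp C e2 (Cmp C k' b)"
  proof -
    have "Cmp C f2 (Cmp C h a) = Cmp C (Cmp C f2 h) a"
      using cat_assoc[OF cat ab(1) hk(1) T'(2)] ab hk T' by auto
    also have "\<dots> = Cmp C (Cmp C g2 k) a" using hk by simp
    also have "\<dots> = Cmp C g2 (Cmp C k a)"
      using cat_assoc[OF cat ab(1) hk(2) T'(5)] ab hk T' by auto
    also have "\<dots> = Cmp C g2 (Cmp C h' b)" using ab by simp
    also have "\<dots> = Cmp C (Cmp C g2 h') b"
      using cat_assoc[OF cat ab(2) hk'(1) T'(5)] ab hk' T' by auto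
    also have "\<dots> = Cmp C (Cmp C e2 k') b" using hk' by simp
    also have "\<dots> = Cmp C e2 (Cmp C k' b)"
      using cat_assoc[OF cat ab(2) hk'(2) T'(8)] ab hk' T' by auto
    finally show ?thesis .
  qed
  show ?thesis unfolding pp rr using T c1 c2 e1 e2 ab(4)
    by (intro gR_I[where h="Cmp C h a" and k="Cmp C k' b"]) auto
qed

lemma gE_gR:
  assumes cat: "category C" and ore: "ore C"
  shows "gE C S = gR C S"
proof
  show "gR C S \<subseteq> gE C S" using gR_gE by auto
  show "gE C S \<subseteq> gR C S"
  proof
    fix x assume "x \<in> gE C S"
    then obtain p q where x: "x = (p, q)" "(p, q) \<in> (gR C S \<union> (gR C S)\<inverse>)\<^sup>*" "p \<in> gT C S"
      unfolding gE_def by auto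
    have "(p, q) \<in> gR C S" using x(2)
    proof (induction rule: rtrancl_induct)
      case base then show ?case using gR_refl[OF cat x(3)] .
    next
      case (step y z)
      then have "(y, z) \<in> gR C S" using gR_sym[of z y C S] by auto
      then show ?case using gR_trans[OF cat ore step.IH] by blast
    qed
    then show "x \<in> gR C S" using x by simp
  qed
qed

definition cand :: "('o,'m) cat \<Rightarrow> 'o \<Rightarrow> ('m \<times> 'm) set \<Rightarrow> ('m \<times> 'm) set \<Rightarrow> ('m \<times> 'm) set \<Rightarrow> bool" where
  "cand C S x y z \<longleftrightarrow> (\<exists>f1 f2 g1 g2 u v. (f1, f2) \<in> x \<and> (g1, g2) \<in> y \<and>
      u \<in> Arr C \<and> v \<in> Arr C \<and> Dom C u = Dom C v \<and> \<not> initial C (Dom C u) \<and>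
      Cod C u = Dom C f1 \<and> Cod C v = Dom C g1 \<and> Cmp C f2 u = Cmp C g1 v \<and>
      z = gclass C S (Cmp C f1 u, Cmp C g2 v))"

lemma gmult_cand: "gmult C S x y = (SOME z. cand C S x y z)"
  unfolding gmult_def cand_def by (rule refl)

definition valid :: "('o,'m) cat \<Rightarrow> 'm \<Rightarrow> 'm \<Rightarrow> 'm \<Rightarrow> 'm \<Rightarrow> 'm \<Rightarrow> 'm \<Rightarrow> bool" where
  "valid C f1 f2 g1 g2 u v \<longleftrightarrow> u \<in> Arr C \<and> v \<in> Arr C \<and> Dom C u = Dom C v \<and> \<not> initial C (Dom C u) \<and>
      Cod C u = Dom C f1 \<and> Cod C v = Dom C g1 \<and> Cmp C f2 u = Cmp C g1 v"

locale catx =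
  fixes C :: "('o,'m) cat"
  assumes cat: "category C" and allmono: "\<forall>f\<in>Arr C. mono C f" and ore: "ore C"
begin

lemma comp_arr[simp]: "f \<in> Arr C \<Longrightarrow> g \<in> Arr C \<Longrightarrow> Cod C f = Dom C g \<Longrightarrow> Cmp C g f \<in> Arr C"
  using cat_comp[OF cat] by blast
lemma comp_dom[simp]: "f \<in> Arr C \<Longrightarrow> g \<in> Arr C \<Longrightarrow> Cod C f = Dom C g \<Longrightarrow> Dom C (Cmp C g f) = Dom C f"
  using cat_comp[OF cat] by blast
lemma comp_cod[simp]: "f \<in> Arr C \<Longrightarrow> g \<in> Arr C \<Longrightarrow> Cod C f = Dom C g \<Longrightarrow> Cod C (Cmp C g f) = Cod C g"
  using cat_comp[OF cat] by blast
lemma assoc[simp]: "f \<in> Arr C \<Longrightarrow> g \<in> Arr C \<Longrightarrow> h \<in> Arr C \<Longrightarrow> Cod C f = Dom C g \<Longrightarrow> Cod C g = Dom C h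
   \<Longrightarrow> Cmp C (Cmp C h g) f = Cmp C h (Cmp C g f)"
  using cat_assoc[OF cat] by blast

lemma whisk:
  assumes "Cmp C a b = Cmp C c d" "a \<in> Arr C" "b \<in> Arr C" "c \<in> Arr C" "d \<in> Arr C" "x \<in> Arr C"
    "Cod C b = Dom C a" "Cod C d = Dom C c" "Cod C x = Dom C b" "Dom C b = Dom C d"
  shows "Cmp C a (Cmp C b x) = Cmp C c (Cmp C d x)"
proof -
  have "Cmp C a (Cmp C b x) = Cmp C (Cmp C a b) x"
    using cat_assoc[OF cat assms(6,3,2)] assms(7,9) by simp
  also have "\<dots> = Cmp C (Cmp C c d) x" by (simp only: assms(1))
  also have "\<dots> = Cmp C c (Cmp C d x)"
    using cat_assoc[OF cat assms(6,5,4)] assms(8,9,10) by simp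
  finally show ?thesis .
qed

lemma monoD:
  assumes "g1 \<in> Arr C" "a \<in> Arr C" "b \<in> Arr C" "Cod C a = Dom C g1" "Cod C b = Dom C g1" "Dom C a = Dom C b"
    "Cmp C g1 a = Cmp C g1 b"
  shows "a = b"
  using allmono assms unfolding mono_def by blast

lemma valid_T:
  assumes "(f1,f2) \<in> gT C S" "(g1,g2) \<in> gT C S" "valid C f1 f2 g1 g2 u v"
  shows "(Cmp C f1 u, Cmp C g2 v) \<in> gT C S"
  using assms gT_D[OF assms(1)] gT_D[OF assms(2)] unfolding valid_def
  by (intro gT_I) auto

lemma stepA:
  assumes T: "(f1,f2) \<in> gT C S" "(g1,g2) \<in> gT C S"
    and V: "valid C f1 f2 g1 g2 u v" "valid C f1 f2 g1 g2 u' v'"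
  shows "((Cmp C f1 u, Cmp C g2 v), (Cmp C f1 u', Cmp C g2 v')) \<in> gR C S"
proof -
  note t1 = gT_D[OF T(1)] and t2 = gT_D[OF T(2)]
  note v1 = V(1)[unfolded valid_def] and v2 = V(2)[unfolded valid_def]
  obtain p q where pq: "p \<in> Arr C" "q \<in> Arr C" "Dom C p = Dom C q" "\<not> initial C (Dom C p)"
     "Cod C p = Dom C u" "Cod C q = Dom C u'" "Cmp C u p = Cmp C u' q"
    using oreE[OF ore, of u u'] v1 v2 by metis
  have u: "u \<in> Arr C" "v \<in> Arr C" "Dom C u = Dom C v" "Cod C u = Dom C f1" "Cod C v = Dom C g1" "Cmp C f2 u = Cmp C g1 v"
    using v1 by auto
  have u': "u' \<in> Arr C" "v' \<in> Arr C" "Dom C u' = Dom C v'" "Cod C u' = Dom C f1" "Cod C v' = Dom C g1" "Cmp C f2 u' = Cmp C g1 v'"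
    using v2 by auto
  have s1: "Cmp C f2 (Cmp C u p) = Cmp C g1 (Cmp C v p)"
    by (rule whisk) (use u t1 t2 pq in simp_all)
  have s2: "Cmp C f2 (Cmp C u' q) = Cmp C g1 (Cmp C v' q)"
    by (rule whisk) (use u' t1 t2 pq in simp_all)
  have "Cmp C v p = Cmp C v' q"
    apply (rule monoD[of g1])
    using u u' t1 t2 pq s1 s2 by simp_all
  then show ?thesis
    apply (intro gR_I[where h=p and k=q] valid_T[OF T V(1)] valid_T[OF T V(2)])
    using u u' t1 t2 pq by simp_all
qed


lemma stepB:
  assumes T: "(f1,f2) \<in> gT C S" "(g1,g2) \<in> gT C S"
    and V: "valid C f1 f2 g1 g2 u v" and R: "((f1,f2),(f1',f2')) \<in> gR C S"
  shows "\<exists>u' v'. valid C f1' f2' g1 g2 u' v' \<and>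
     ((Cmp C f1 u, Cmp C g2 v), (Cmp C f1' u', Cmp C g2 v')) \<in> gR C S"
proof -
  note t1 = gT_D[OF T(1)] and t2 = gT_D[OF T(2)]
  note v1 = V[unfolded valid_def]
  have T': "(f1',f2') \<in> gT C S" using R gR_T[of C S] by auto
  note t1' = gT_D[OF T']
  have u: "u \<in> Arr C" "v \<in> Arr C" "Dom C u = Dom C v" "Cod C u = Dom C f1" "Cod C v = Dom C g1"
     "Cmp C f2 u = Cmp C g1 v" "\<not> initial C (Dom C u)"
    using v1 by auto
  obtain h h' where hh: "h \<in> Arr C" "h' \<in> Arr C" "Dom C h = Dom C h'" "\<not> initial C (Dom C h)"
        "Cod C h = Dom C f1" "Cod C h' = Dom C f1'" "Cmp C f1 h = Cmp C f1' h'" "Cmp C f2 h = Cmp C f2' h'"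
    using R unfolding gR_def by auto
  obtain p q where pq: "p \<in> Arr C" "q \<in> Arr C" "Dom C p = Dom C q" "\<not> initial C (Dom C p)"
     "Cod C p = Dom C u" "Cod C q = Dom C h" "Cmp C u p = Cmp C h q"
    using oreE[OF ore, of u h] u hh by metis
  have s1: "Cmp C f2 (Cmp C h q) = Cmp C f2' (Cmp C h' q)"
    by (rule whisk) (use hh t1 t1' pq in simp_all)
  have s2: "Cmp C f2 (Cmp C u p) = Cmp C g1 (Cmp C v p)"
    by (rule whisk) (use u t1 t2 pq in simp_all)
  have e2: "Cmp C f2' (Cmp C h' q) = Cmp C g1 (Cmp C v p)"
    using s1 s2 pq(7) by simp
  have V': "valid C f1' f2' g1 g2 (Cmp C h' q) (Cmp C v p)"
    unfolding valid_def using e2 hh pq u t1 t1' t2 by simp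
  have s3: "Cmp C f1 (Cmp C h q) = Cmp C f1' (Cmp C h' q)"
    by (rule whisk) (use hh t1 t1' pq in simp_all)
  have e1: "Cmp C f1' (Cmp C h' q) = Cmp C f1 (Cmp C u p)"
    using s3 pq(7) by simp
  have o: "Dom C p \<in> Obj C" using cat_dom_obj(1)[OF cat pq(1)] .
  note ii = cat_id[OF cat o]
  have "((Cmp C f1 u, Cmp C g2 v), (Cmp C f1' (Cmp C h' q), Cmp C g2 (Cmp C v p))) \<in> gR C S"
    apply (intro gR_I[where h=p and k="Id C (Dom C p)"] valid_T[OF T V] valid_T[OF T' T(2) V'])
    using e1 hh pq u t1 t1' t2 ii
       cat_idr[OF cat, of "Cmp C f1' (Cmp C h' q)"] cat_idr[OF cat, of "Cmp C g2 (Cmp C v p)"]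
    by simp_all
  then show ?thesis using V' by blast
qed

lemma stepC:
  assumes T: "(f1,f2) \<in> gT C S" "(g1,g2) \<in> gT C S"
    and V: "valid C f1 f2 g1 g2 u v" and R: "((g1,g2),(g1',g2')) \<in> gR C S"
  shows "\<exists>u' v'. valid C f1 f2 g1' g2' u' v' \<and>
     ((Cmp C f1 u, Cmp C g2 v), (Cmp C f1 u', Cmp C g2' v')) \<in> gR C S"
proof -
  note t1 = gT_D[OF T(1)] and t2 = gT_D[OF T(2)]
  note v1 = V[unfolded valid_def]
  have T': "(g1',g2') \<in> gT C S" using R gR_T[of C S] by auto
  note t2' = gT_D[OF T']
  have u: "u \<in> Arr C" "v \<in> Arr C" "Dom C u = Dom C v" "Cod C u = Dom C f1" "Cod C v = Dom C g1"
     "Cmp C f2 u = Cmp C g1 v" "\<not> initial C (Dom C v)"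
    using v1 by auto
  obtain k k' where kk: "k \<in> Arr C" "k' \<in> Arr C" "Dom C k = Dom C k'" "\<not> initial C (Dom C k)"
        "Cod C k = Dom C g1" "Cod C k' = Dom C g1'" "Cmp C g1 k = Cmp C g1' k'" "Cmp C g2 k = Cmp C g2' k'"
    using R unfolding gR_def by auto
  obtain p q where pq: "p \<in> Arr C" "q \<in> Arr C" "Dom C p = Dom C q" "\<not> initial C (Dom C p)"
     "Cod C p = Dom C v" "Cod C q = Dom C k" "Cmp C v p = Cmp C k q"
    using oreE[OF ore, of v k] u kk by metis
  have s1: "Cmp C f2 (Cmp C u p) = Cmp C g1 (Cmp C v p)"
    by (rule whisk) (use u t1 t2 pq in simp_all)
  have s2: "Cmp C g1 (Cmp C k q) = Cmp C g1' (Cmp C k' q)"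
    by (rule whisk) (use kk t2 t2' pq in simp_all)
  have e2: "Cmp C f2 (Cmp C u p) = Cmp C g1' (Cmp C k' q)"
    using s1 s2 pq(7) by simp
  have V': "valid C f1 f2 g1' g2' (Cmp C u p) (Cmp C k' q)"
    unfolding valid_def using e2 kk pq u t1 t2' t2 by simp
  have s3: "Cmp C g2 (Cmp C k q) = Cmp C g2' (Cmp C k' q)"
    by (rule whisk) (use kk t2 t2' pq in simp_all)
  have e1: "Cmp C g2' (Cmp C k' q) = Cmp C g2 (Cmp C v p)"
    using s3 pq(7) by simp
  have o: "Dom C p \<in> Obj C" using cat_dom_obj(1)[OF cat pq(1)] .
  note ii = cat_id[OF cat o]
  have "((Cmp C f1 u, Cmp C g2 v), (Cmp C f1 (Cmp C u p), Cmp C g2' (Cmp C k' q))) \<in> gR C S"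
    apply (intro gR_I[where h=p and k="Id C (Dom C p)"] valid_T[OF T V] valid_T[OF T(1) T' V'])
    using e1 kk pq u t1 t2' t2 ii
       cat_idr[OF cat, of "Cmp C f1 (Cmp C u p)"] cat_idr[OF cat, of "Cmp C g2' (Cmp C k' q)"]
    by simp_all
  then show ?thesis using V' by blast
qed


lemma class_rel:
  assumes "x \<in> gT C S // gE C S" "p \<in> x" "q \<in> x"
  shows "(p, q) \<in> gR C S"
  using in_quotient_imp_in_rel[OF gE_equiv assms(1), of p q] assms gE_gR[OF cat ore] by auto

lemma class_sub:
  assumes "x \<in> gT C S // gE C S" "p \<in> x" shows "p \<in> gT C S"
  using in_quotient_imp_subset[OF gE_equiv assms(1)] assms(2) by auto

lemma candD:
  assumes "cand C S x y z"
  obtains f1 f2 g1 g2 u v where "(f1,f2) \<in> x" "(g1,g2) \<in> y" "valid C f1 f2 g1 g2 u v"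
    "z = gclass C S (Cmp C f1 u, Cmp C g2 v)"
  using assms unfolding cand_def valid_def by blast

lemma candI:
  assumes "(f1,f2) \<in> x" "(g1,g2) \<in> y" "valid C f1 f2 g1 g2 u v"
  shows "cand C S x y (gclass C S (Cmp C f1 u, Cmp C g2 v))"
  using assms unfolding cand_def valid_def by blast

lemma cand_unique:
  assumes x: "x \<in> gT C S // gE C S" and y: "y \<in> gT C S // gE C S"
    and c1: "cand C S x y z" and c2: "cand C S x y z'"
  shows "z = z'"
proof -
  obtain f1 f2 g1 g2 u v where a: "(f1,f2) \<in> x" "(g1,g2) \<in> y" "valid C f1 f2 g1 g2 u v"
    "z = gclass C S (Cmp C f1 u, Cmp C g2 v)" using candD[OF c1] by blast
  obtain f1' f2' g1' g2' u' v' where b: "(f1',f2') \<in> x" "(g1',g2') \<in> y" "valid C f1' f2' g1' g2' u' v'"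
    "z' = gclass C S (Cmp C f1' u', Cmp C g2' v')" using candD[OF c2] by blast
  have Rf: "((f1,f2),(f1',f2')) \<in> gR C S" using class_rel[OF x a(1) b(1)] .
  have Rg: "((g1,g2),(g1',g2')) \<in> gR C S" using class_rel[OF y a(2) b(2)] .
  have Tf: "(f1,f2) \<in> gT C S" "(f1',f2') \<in> gT C S" using class_sub[OF x] a b by auto
  have Tg: "(g1,g2) \<in> gT C S" "(g1',g2') \<in> gT C S" using class_sub[OF y] a b by auto
  obtain u1 v1 where 1: "valid C f1' f2' g1 g2 u1 v1"
     "((Cmp C f1 u, Cmp C g2 v), (Cmp C f1' u1, Cmp C g2 v1)) \<in> gR C S"
    using stepB[OF Tf(1) Tg(1) a(3) Rf] by blast
  obtain u2 v2 where 2: "valid C f1' f2' g1' g2' u2 v2"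
     "((Cmp C f1' u1, Cmp C g2 v1), (Cmp C f1' u2, Cmp C g2' v2)) \<in> gR C S"
    using stepC[OF Tf(2) Tg(1) 1(1) Rg] by blast
  have 3: "((Cmp C f1' u2, Cmp C g2' v2), (Cmp C f1' u', Cmp C g2' v')) \<in> gR C S"
    using stepA[OF Tf(2) Tg(2) 2(1) b(3)] .
  have "((Cmp C f1 u, Cmp C g2 v), (Cmp C f1' u', Cmp C g2' v')) \<in> gR C S"
    using gR_trans[OF cat ore gR_trans[OF cat ore 1(2) 2(2)] 3] .
  then show ?thesis using a(4) b(4) gclass_eq gR_gE by metis
qed

lemma gmult_eq:
  assumes x: "x \<in> gT C S // gE C S" and y: "y \<in> gT C S // gE C S"
    and c: "cand C S x y z"
  shows "gmult C S x y = z"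
  unfolding gmult_cand
  using cand_unique[OF x y] c by (metis someI)

end

lemma fs_Obj: "A \<in> Obj (full_sub C U) \<longleftrightarrow> A \<in> Obj C \<and> homs C A U \<noteq> {}"
  by (simp add: full_sub_def)
lemma fs_Arr: "f \<in> Arr (full_sub C U) \<longleftrightarrow> f \<in> Arr C \<and> homs C (Dom C f) U \<noteq> {} \<and> homs C (Cod C f) U \<noteq> {}"
  by (simp add: full_sub_def)
lemma fs_ops[simp]: "Dom (full_sub C U) = Dom C" "Cod (full_sub C U) = Cod C"
  "Cmp (full_sub C U) = Cmp C" "Id (full_sub C U) = Id C"
  by (simp_all add: full_sub_def)

lemma gR_iff: "((f1,f2),(g1,g2)) \<in> gR C S \<longleftrightarrow> (f1,f2) \<in> gT C S \<and> (g1,g2) \<in> gT C S \<and>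
     (\<exists>h k. h \<in> Arr C \<and> k \<in> Arr C \<and> Dom C h = Dom C k \<and> \<not> initial C (Dom C h) \<and>
        Cod C h = Dom C f1 \<and> Cod C k = Dom C g1 \<and>
        Cmp C f1 h = Cmp C g1 k \<and> Cmp C f2 h = Cmp C g2 k)"
  unfolding gR_def by simp

lemma gR_elim:
  assumes "x \<in> gR C S"
  obtains f1 f2 g1 g2 h k where "x = ((f1,f2),(g1,g2))" "(f1,f2) \<in> gT C S" "(g1,g2) \<in> gT C S"
    "h \<in> Arr C" "k \<in> Arr C" "Dom C h = Dom C k" "\<not> initial C (Dom C h)"
    "Cod C h = Dom C f1" "Cod C k = Dom C g1" "Cmp C f1 h = Cmp C g1 k" "Cmp C f2 h = Cmp C g2 k"
proof -
  obtain f1 f2 g1 g2 where x: "x = ((f1,f2),(g1,g2))" by (metis prod.exhaust)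
  then show ?thesis using assms that unfolding x gR_iff by blast
qed

lemma cand_I0:
  assumes "(f1,f2) \<in> x" "(g1,g2) \<in> y" "u \<in> Arr C" "v \<in> Arr C" "Dom C u = Dom C v"
    "\<not> initial C (Dom C u)" "Cod C u = Dom C f1" "Cod C v = Dom C g1" "Cmp C f2 u = Cmp C g1 v"
    "z = gclass C S (Cmp C f1 u, Cmp C g2 v)"
  shows "cand C S x y z"
  unfolding cand_def
  apply (rule exI[of _ f1], rule exI[of _ f2], rule exI[of _ g1], rule exI[of _ g2], rule exI[of _ u], rule exI[of _ v])
  using assms by simp

lemma cand_E0:
  assumes "cand C S x y z"
  obtains f1 f2 g1 g2 u v where "(f1,f2) \<in> x" "(g1,g2) \<in> y" "u \<in> Arr C" "v \<in> Arr C" "Dom C u = Dom C v"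
    "\<not> initial C (Dom C u)" "Cod C u = Dom C f1" "Cod C v = Dom C g1" "Cmp C f2 u = Cmp C g1 v"
    "z = gclass C S (Cmp C f1 u, Cmp C g2 v)"
  using assms unfolding cand_def by (elim exE conjE) blast

locale fsx = catx C for C :: "('o,'m) cat" +
  fixes U E
  assumes U: "U \<in> Obj C" and E: "initial C E"
begin

abbreviation "D \<equiv> full_sub C U"

lemma toU: assumes "f \<in> Arr C" "Cod C f = U" shows "homs C (Dom C f) U \<noteq> {}"
proof -
  have "f \<in> homs C (Dom C f) U" using assms unfolding homs_def by simp
  then show ?thesis by (rule ex_in_conv[THEN iffD1, OF exI, simplified])
qed

lemma toU_comp: assumes "f \<in> Arr C" "homs C (Cod C f) U \<noteq> {}" shows "homs C (Dom C f) U \<noteq> {}"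
proof -
  obtain g where g: "g \<in> homs C (Cod C f) U" using assms(2) by blast
  then have "Cmp C g f \<in> homs C (Dom C f) U" using assms(1) cat_comp[OF cat, of f g] unfolding homs_def by simp
  then show ?thesis by (rule ex_in_conv[THEN iffD1, OF exI, simplified])
qed

lemma UU: "homs C U U \<noteq> {}"
proof -
  have "Id C U \<in> homs C U U" using cat_id[OF cat U] unfolding homs_def by simp
  then show ?thesis by (rule ex_in_conv[THEN iffD1, OF exI, simplified])
qed

lemma arr_D: "f \<in> Arr C \<Longrightarrow> homs C (Cod C f) U \<noteq> {} \<Longrightarrow> f \<in> Arr D"
  unfolding fs_Arr using toU_comp by simp

lemma homs_D: assumes "A \<in> Obj D" "B \<in> Obj D" shows "homs D A B = homs C A B"
proof
  show "homs D A B \<subseteq> homs C A B" unfolding homs_def fs_Arr by auto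
  show "homs C A B \<subseteq> homs D A B" using assms unfolding homs_def fs_Arr fs_Obj by auto
qed

lemma E_D: "E \<in> Obj D"
proof -
  have "E \<in> Obj C" using E unfolding initial_def by auto
  moreover have "homs C E U \<noteq> {}" using E U unfolding initial_def by blast
  ultimately show ?thesis unfolding fs_Obj by simp
qed

lemma init_fs:
  assumes A: "A \<in> Obj D"
  shows "initial D A \<longleftrightarrow> initial C A"
proof
  assume iC: "initial C A"
  show "initial D A" unfolding initial_def
  proof (intro conjI ballI)
    show "A \<in> Obj D" by (fact A)
    fix B assume B: "B \<in> Obj D"
    then have "B \<in> Obj C" unfolding fs_Obj by simp
    then show "\<exists>!f. f \<in> homs D A B" using iC homs_D[OF A B] unfolding initial_def by simp
  qed
next
  assume iD: "initial D A"
  have AC: "A \<in> Obj C" using A unfolding fs_Obj by simp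
  have EC: "E \<in> Obj C" using E unfolding initial_def by auto
  obtain e where e: "e \<in> homs C A E" using iD E_D homs_D[OF A E_D] unfolding initial_def by blast
  obtain m where m: "m \<in> homs C E A" using E AC unfolding initial_def by blast
  have me: "Cmp C m e \<in> homs D A A" using e m homs_D[OF A A] cat_comp[OF cat] unfolding homs_def by auto
  have ia: "Id C A \<in> homs D A A" using cat_id[OF cat AC] homs_D[OF A A] unfolding homs_def by auto
  have me_id: "Cmp C m e = Id C A" using iD A me ia unfolding initial_def by blast
  show "initial C A" unfolding initial_def
  proof (intro conjI ballI)
    show "A \<in> Obj C" by (fact AC)
    fix B assume B: "B \<in> Obj C"
    obtain b where b: "b \<in> homs C E B" using E B unfolding initial_def by blast
    have ex: "Cmp C b e \<in> homs C A B" using b e cat_comp[OF cat] unfolding homs_def by auto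
    have un: "f = g" if f: "f \<in> homs C A B" and g: "g \<in> homs C A B" for f g
    proof -
      have "Cmp C f m \<in> homs C E B" "Cmp C g m \<in> homs C E B"
        using f g m cat_comp[OF cat] unfolding homs_def by auto
      then have fm: "Cmp C f m = Cmp C g m" using E B unfolding initial_def by blast
      have "f = Cmp C f (Cmp C m e)" using me_id cat_idr[OF cat] f unfolding homs_def by auto
      also have "\<dots> = Cmp C (Cmp C f m) e" using cat_assoc[OF cat, of e m f] e m f unfolding homs_def by auto
      also have "\<dots> = Cmp C (Cmp C g m) e" using fm by simp
      also have "\<dots> = Cmp C g (Cmp C m e)" using cat_assoc[OF cat, of e m g] e m g unfolding homs_def by auto
      also have "\<dots> = g" using me_id cat_idr[OF cat] g unfolding homs_def by auto
      finally show ?thesis .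
    qed
    show "\<exists>!f. f \<in> homs C A B" using ex un by blast
  qed
qed

lemma init_fs_arr: "f \<in> Arr C \<Longrightarrow> homs C (Cod C f) U \<noteq> {} \<Longrightarrow> initial D (Dom C f) \<longleftrightarrow> initial C (Dom C f)"
  using init_fs toU_comp cat_dom_obj[OF cat] fs_Obj by metis

lemma gT_fs: "gT D U = gT C U"
proof -
  have "f1 \<in> Arr D \<longleftrightarrow> f1 \<in> Arr C" if "Cod C f1 = U" for f1
    using arr_D[of f1] UU that unfolding fs_Arr by auto
  moreover have "initial D (Dom C f1) \<longleftrightarrow> initial C (Dom C f1)" if "f1 \<in> Arr C" "Cod C f1 = U" for f1
    using init_fs_arr UU that by auto
  ultimately show ?thesis unfolding gT_def by auto
qed


lemma arr_D_iff: "f1 \<in> Arr C \<Longrightarrow> Cod C f1 = U \<Longrightarrow> Cod C h = Dom C f1 \<Longrightarrow> h \<in> Arr D \<longleftrightarrow> h \<in> Arr C"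
  using arr_D[of h] toU[of f1] unfolding fs_Arr by auto

lemma init_D_iff: "f1 \<in> Arr C \<Longrightarrow> Cod C f1 = U \<Longrightarrow> Cod C h = Dom C f1 \<Longrightarrow> h \<in> Arr C \<Longrightarrow>
   initial D (Dom C h) \<longleftrightarrow> initial C (Dom C h)"
  using init_fs_arr[of h] toU[of f1] by auto

lemma gR_fs: "gR D U = gR C U"
proof (rule equalityI; rule subsetI)
  fix x assume "x \<in> gR D U"
  then obtain f1 f2 g1 g2 h k where x: "x = ((f1,f2),(g1,g2))" "(f1,f2) \<in> gT C U" "(g1,g2) \<in> gT C U"
    "h \<in> Arr D" "k \<in> Arr D" "Dom C h = Dom C k" "\<not> initial D (Dom C h)"
    "Cod C h = Dom C f1" "Cod C k = Dom C g1" "Cmp C f1 h = Cmp C g1 k" "Cmp C f2 h = Cmp C g2 k"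
    by (rule gR_elim) (auto simp: gT_fs)
  note a = gT_D[OF x(2)] and b = gT_D[OF x(3)]
  have "h \<in> Arr C" "k \<in> Arr C" using x arr_D_iff[OF a(1) a(4)] arr_D_iff[OF b(1) b(4)] by auto
  moreover have "\<not> initial C (Dom C h)" using x(7) init_D_iff[OF a(1) a(4) x(8) calculation(1)] by blast
  ultimately show "x \<in> gR C U" unfolding x(1) using x by (intro gR_I) auto
next
  fix x assume "x \<in> gR C U"
  then obtain f1 f2 g1 g2 h k where x: "x = ((f1,f2),(g1,g2))" "(f1,f2) \<in> gT C U" "(g1,g2) \<in> gT C U"
    "h \<in> Arr C" "k \<in> Arr C" "Dom C h = Dom C k" "\<not> initial C (Dom C h)"
    "Cod C h = Dom C f1" "Cod C k = Dom C g1" "Cmp C f1 h = Cmp C g1 k" "Cmp C f2 h = Cmp C g2 k"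
    by (rule gR_elim) auto
  note a = gT_D[OF x(2)] and b = gT_D[OF x(3)]
  have "h \<in> Arr D" "k \<in> Arr D" using x arr_D_iff[OF a(1) a(4)] arr_D_iff[OF b(1) b(4)] by auto
  moreover have "\<not> initial D (Dom C h)" using x(7) init_D_iff[OF a(1) a(4) x(8) x(4)] by blast
  ultimately show "x \<in> gR D U" unfolding x(1) using x gT_fs
    by (intro gR_I) auto
qed

lemma gE_fs: "gE D U = gE C U"
  unfolding gE_def gR_fs gT_fs ..

lemma gclass_fs: "gclass D U = gclass C U"
  unfolding gclass_def gE_fs ..

lemma cand_fs:
  assumes "x \<subseteq> gT C U" "y \<subseteq> gT C U"
  shows "cand D U x y z \<longleftrightarrow> cand C U x y z"
proof
  assume "cand D U x y z"
  then obtain f1 f2 g1 g2 u v where c: "(f1, f2) \<in> x" "(g1, g2) \<in> y"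
      "u \<in> Arr D" "v \<in> Arr D" "Dom C u = Dom C v" "\<not> initial D (Dom C u)"
      "Cod C u = Dom C f1" "Cod C v = Dom C g1" "Cmp C f2 u = Cmp C g1 v"
      "z = gclass C U (Cmp C f1 u, Cmp C g2 v)"
    by (rule cand_E0) (auto simp: gclass_fs)
  have t1: "(f1,f2) \<in> gT C U" using c(1) assms(1) by blast
  have t2: "(g1,g2) \<in> gT C U" using c(2) assms(2) by blast
  have a: "f1 \<in> Arr C" "Cod C f1 = U" "g1 \<in> Arr C" "Cod C g1 = U"
    using gT_D[OF t1] gT_D[OF t2] by simp_all
  have "u \<in> Arr C" "v \<in> Arr C" using c(3,4) arr_D_iff[OF a(1,2) c(7)] arr_D_iff[OF a(3,4) c(8)] by simp_all
  moreover have "\<not> initial C (Dom C u)" using c(6) init_D_iff[OF a(1,2) c(7) calculation(1)] by blast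
  ultimately show "cand C U x y z" using c by (intro cand_I0) auto
next
  assume "cand C U x y z"
  then obtain f1 f2 g1 g2 u v where c: "(f1, f2) \<in> x" "(g1, g2) \<in> y"
      "u \<in> Arr C" "v \<in> Arr C" "Dom C u = Dom C v" "\<not> initial C (Dom C u)"
      "Cod C u = Dom C f1" "Cod C v = Dom C g1" "Cmp C f2 u = Cmp C g1 v"
      "z = gclass C U (Cmp C f1 u, Cmp C g2 v)"
    by (rule cand_E0) auto
  have t1: "(f1,f2) \<in> gT C U" using c(1) assms(1) by blast
  have t2: "(g1,g2) \<in> gT C U" using c(2) assms(2) by blast
  have a: "f1 \<in> Arr C" "Cod C f1 = U" "g1 \<in> Arr C" "Cod C g1 = U"
    using gT_D[OF t1] gT_D[OF t2] by simp_all
  have "u \<in> Arr D" "v \<in> Arr D" using c(3,4) arr_D_iff[OF a(1,2) c(7)] arr_D_iff[OF a(3,4) c(8)] by simp_all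
  moreover have "\<not> initial D (Dom C u)" using c(6) init_D_iff[OF a(1,2) c(7) c(3)] by blast
  ultimately show "cand D U x y z" using c by (intro cand_I0) (auto simp: gclass_fs)
qed

lemma gmult_fs:
  assumes "x \<subseteq> gT C U" "y \<subseteq> gT C U"
  shows "gmult D U x y = gmult C U x y"
proof -
  have "cand D U x y = cand C U x y" by (rule ext) (rule cand_fs[OF assms])
  then show ?thesis unfolding gmult_cand by simp
qed

end

lemma class_eq_rep:
  assumes "x \<in> gT C S // gE C S" "r \<in> x" shows "x = gclass C S r"
proof -
  obtain p where p: "x = gE C S `` {p}" "p \<in> gT C S" using assms(1) by (rule quotientE)
  then have "(p, r) \<in> gE C S" using assms(2) by simp
  then have "gE C S `` {p} = gE C S `` {r}" by (rule equiv_class_eq[OF gE_equiv])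
  then show ?thesis unfolding p(1) gclass_def .
qed

lemma class_self: "r \<in> gT C S \<Longrightarrow> r \<in> gclass C S r"
  unfolding gclass_def using equiv_class_self[OF gE_equiv] .

lemma class_in: "r \<in> gT C S \<Longrightarrow> gclass C S r \<in> gT C S // gE C S"
  unfolding gclass_def by (rule quotientI)

definition phi :: "('o,'m) cat \<Rightarrow> 'o \<Rightarrow> 'm \<Rightarrow> ('m \<times> 'm) set \<Rightarrow> ('m \<times> 'm) set" where
  "phi C S FU x = gclass C S (Cmp C FU (fst (SOME r. r \<in> x)), Cmp C FU (snd (SOME r. r \<in> x)))"

locale phix = fsx C U E for C :: "('o,'m) cat" and U E +
  fixes S FU
  assumes fu: "FU \<in> Arr C" "Dom C FU = U" "Cod C FU = S" and nU: "\<not> initial C U"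
begin

lemma FU_T:
  assumes "(a, b) \<in> gT C U" shows "(Cmp C FU a, Cmp C FU b) \<in> gT C S"
  using gT_D[OF assms] fu by (intro gT_I) simp_all

lemma FU_rel:
  assumes "((a,b),(c,d)) \<in> gR C U"
  shows "((Cmp C FU a, Cmp C FU b), (Cmp C FU c, Cmp C FU d)) \<in> gR C S"
proof -
  obtain h k where hk: "(a,b) \<in> gT C U" "(c,d) \<in> gT C U" "h \<in> Arr C" "k \<in> Arr C" "Dom C h = Dom C k"
    "\<not> initial C (Dom C h)" "Cod C h = Dom C a" "Cod C k = Dom C c" "Cmp C a h = Cmp C c k" "Cmp C b h = Cmp C d k"
    using assms unfolding gR_iff by blast
  note t1 = gT_D[OF hk(1)] and t2 = gT_D[OF hk(2)]
  show ?thesis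
    apply (rule gR_I[where h=h and k=k, OF FU_T[OF hk(1)] FU_T[OF hk(2)]])
    using hk t1 t2 fu by simp_all
qed

lemma phi_rep:
  assumes x: "x \<in> gT C U // gE C U" and r: "(a, b) \<in> x"
  shows "phi C S FU x = gclass C S (Cmp C FU a, Cmp C FU b)"
proof -
  let ?r = "SOME r. r \<in> x"
  have r0: "?r \<in> x" using r by (rule someI)
  obtain a0 b0 where ab0: "?r = (a0, b0)" by (cases ?r)
  have "((a0,b0),(a,b)) \<in> gR C U" using class_rel[OF x, of "(a0,b0)" "(a,b)"] r0 ab0 r by simp
  then have "((Cmp C FU a0, Cmp C FU b0), (Cmp C FU a, Cmp C FU b)) \<in> gE C S"
    by (rule gR_gE[OF FU_rel])
  then have "gclass C S (Cmp C FU a0, Cmp C FU b0) = gclass C S (Cmp C FU a, Cmp C FU b)" by (rule gclass_eq)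
  then show ?thesis unfolding phi_def ab0 by simp
qed

lemma phi_carrier:
  assumes x: "x \<in> gT C U // gE C U"
  shows "phi C S FU x \<in> gT C S // gE C S"
proof -
  obtain p where p: "x = gE C U `` {p}" "p \<in> gT C U" using x by (rule quotientE)
  obtain a b where ab: "p = (a, b)" by (cases p)
  have "(a,b) \<in> x" using p ab class_self[of p C U] unfolding gclass_def by simp
  then have "phi C S FU x = gclass C S (Cmp C FU a, Cmp C FU b)" by (rule phi_rep[OF x])
  moreover have "(Cmp C FU a, Cmp C FU b) \<in> gT C S" using FU_T p ab by simp
  ultimately show ?thesis using class_in by simp
qed


lemma rep_ex:
  assumes "x \<in> gT C' S' // gE C' S'" obtains a b where "(a, b) \<in> x"
proof -
  obtain p where p: "x = gE C' S' `` {p}" "p \<in> gT C' S'" using assms by (rule quotientE)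
  have "p \<in> x" using class_self[OF p(2)] p(1) unfolding gclass_def by simp
  then show ?thesis using that by (cases p) blast
qed

lemma phi_hom:
  assumes x: "x \<in> gT C U // gE C U" and y: "y \<in> gT C U // gE C U"
  shows "phi C S FU (gmult D U x y) = gmult C S (phi C S FU x) (phi C S FU y)"
proof -
  obtain f1 f2 where f: "(f1,f2) \<in> x" by (rule rep_ex[OF x])
  obtain g1 g2 where g: "(g1,g2) \<in> y" by (rule rep_ex[OF y])
  have tf: "(f1,f2) \<in> gT C U" by (rule class_sub[OF x f])
  have tg: "(g1,g2) \<in> gT C U" by (rule class_sub[OF y g])
  note a = gT_D[OF tf] and b = gT_D[OF tg]
  have c: "Cod C f2 = Cod C g1" using a b by simp
  have n2: "\<not> initial C (Dom C f2)" using a by simp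
  obtain u v where uv: "u \<in> Arr C" "v \<in> Arr C" "Dom C u = Dom C v" "\<not> initial C (Dom C u)"
     "Cod C u = Dom C f2" "Cod C v = Dom C g1" "Cmp C f2 u = Cmp C g1 v"
    by (rule oreE[OF ore a(2) b(1) c n2 b(6)])
  have V: "valid C f1 f2 g1 g2 u v" unfolding valid_def using uv a by simp
  have m: "gmult C U x y = gclass C U (Cmp C f1 u, Cmp C g2 v)"
    by (rule gmult_eq[OF x y candI[OF f g V]])
  have sx: "x \<subseteq> gT C U" by (rule in_quotient_imp_subset[OF gE_equiv x])
  have sy: "y \<subseteq> gT C U" by (rule in_quotient_imp_subset[OF gE_equiv y])
  have m': "gmult D U x y = gclass C U (Cmp C f1 u, Cmp C g2 v)" using gmult_fs[OF sx sy] m by simp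
  have TZ: "(Cmp C f1 u, Cmp C g2 v) \<in> gT C U" by (rule valid_T[OF tf tg V])
  have l: "phi C S FU (gmult D U x y) = gclass C S (Cmp C FU (Cmp C f1 u), Cmp C FU (Cmp C g2 v))"
    unfolding m' by (rule phi_rep[OF class_in[OF TZ] class_self[OF TZ]])
  have px: "phi C S FU x = gclass C S (Cmp C FU f1, Cmp C FU f2)" by (rule phi_rep[OF x f])
  have py: "phi C S FU y = gclass C S (Cmp C FU g1, Cmp C FU g2)" by (rule phi_rep[OF y g])
  have TX: "(Cmp C FU f1, Cmp C FU f2) \<in> gT C S" by (rule FU_T[OF tf])
  have TY: "(Cmp C FU g1, Cmp C FU g2) \<in> gT C S" by (rule FU_T[OF tg])
  have V2: "valid C (Cmp C FU f1) (Cmp C FU f2) (Cmp C FU g1) (Cmp C FU g2) u v"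
    unfolding valid_def using uv a b fu by simp
  have "gmult C S (phi C S FU x) (phi C S FU y)
      = gclass C S (Cmp C (Cmp C FU f1) u, Cmp C (Cmp C FU g2) v)"
    unfolding px py by (rule gmult_eq[OF class_in[OF TX] class_in[OF TY] candI[OF class_self[OF TX] class_self[OF TY] V2]])
  also have "\<dots> = gclass C S (Cmp C FU (Cmp C f1 u), Cmp C FU (Cmp C g2 v))"
    using uv a b fu by simp
  finally show ?thesis using l by simp
qed

lemma phi_inj:
  assumes x: "x \<in> gT C U // gE C U" and y: "y \<in> gT C U // gE C U"
    and eq: "phi C S FU x = phi C S FU y"
  shows "x = y"
proof -
  obtain a b where f: "(a,b) \<in> x" by (rule rep_ex[OF x])
  obtain c d where g: "(c,d) \<in> y" by (rule rep_ex[OF y])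
  have tf: "(a,b) \<in> gT C U" by (rule class_sub[OF x f])
  have tg: "(c,d) \<in> gT C U" by (rule class_sub[OF y g])
  note ta = gT_D[OF tf] and tc = gT_D[OF tg]
  have "gclass C S (Cmp C FU a, Cmp C FU b) = gclass C S (Cmp C FU c, Cmp C FU d)"
    using eq phi_rep[OF x f] phi_rep[OF y g] by simp
  then have "((Cmp C FU a, Cmp C FU b), (Cmp C FU c, Cmp C FU d)) \<in> gE C S"
    unfolding gclass_def using eq_equiv_class_iff[OF gE_equiv FU_T[OF tf] FU_T[OF tg]] by simp
  then have "((Cmp C FU a, Cmp C FU b), (Cmp C FU c, Cmp C FU d)) \<in> gR C S"
    using gE_gR[OF cat ore] by simp
  then obtain h k where hk: "h \<in> Arr C" "k \<in> Arr C" "Dom C h = Dom C k"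
    "\<not> initial C (Dom C h)" "Cod C h = Dom C (Cmp C FU a)" "Cod C k = Dom C (Cmp C FU c)"
    "Cmp C (Cmp C FU a) h = Cmp C (Cmp C FU c) k" "Cmp C (Cmp C FU b) h = Cmp C (Cmp C FU d) k"
    unfolding gR_iff by blast
  have hk2: "Cod C h = Dom C a" "Cod C k = Dom C c" using hk(5,6) ta tc fu by simp_all
  have e1: "Cmp C FU (Cmp C a h) = Cmp C FU (Cmp C c k)" using hk(7) hk hk2 ta tc fu by simp
  have e2: "Cmp C FU (Cmp C b h) = Cmp C FU (Cmp C d k)" using hk(8) hk hk2 ta tc fu by simp
  have q1: "Cmp C a h = Cmp C c k"
    by (rule monoD[OF fu(1) _ _ _ _ _ e1]) (use hk hk2 ta tc fu in simp_all)
  have q2: "Cmp C b h = Cmp C d k"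
    by (rule monoD[OF fu(1) _ _ _ _ _ e2]) (use hk hk2 ta tc fu in simp_all)
  have "((a,b),(c,d)) \<in> gR C U"
    by (rule gR_I[OF tf tg hk(1,2,3,4) hk2 q1 q2])
  then have "gclass C U (a,b) = gclass C U (c,d)" by (rule gclass_eq[OF gR_gE])
  then show ?thesis using class_eq_rep[OF x f] class_eq_rep[OF y g] by simp
qed

lemma phi_surj:
  assumes w: "w \<in> gT C S // gE C S"
  shows "w \<in> phi C S FU ` (gT C U // gE C U)"
proof -
  obtain e1 e2 where e: "(e1,e2) \<in> w" by (rule rep_ex[OF w])
  have te: "(e1,e2) \<in> gT C S" by (rule class_sub[OF w e])
  note t = gT_D[OF te]
  obtain p q where pq: "p \<in> Arr C" "q \<in> Arr C" "Dom C p = Dom C q" "\<not> initial C (Dom C p)"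
     "Cod C p = Dom C e1" "Cod C q = Dom C FU" "Cmp C e1 p = Cmp C FU q"
    by (rule oreE[OF ore t(1) fu(1)]) (use t fu nU in simp_all)
  have a2: "Cmp C e2 p \<in> Arr C" "Cod C (Cmp C e2 p) = S" "Dom C (Cmp C e2 p) = Dom C p"
    using t pq by simp_all
  obtain r s where rs: "r \<in> Arr C" "s \<in> Arr C" "Dom C r = Dom C s" "\<not> initial C (Dom C r)"
     "Cod C r = Dom C (Cmp C e2 p)" "Cod C s = Dom C FU" "Cmp C (Cmp C e2 p) r = Cmp C FU s"
    by (rule oreE[OF ore a2(1) fu(1)]) (use a2 fu nU pq in simp_all)
  have rs2: "Cod C r = Dom C p" using rs(5) a2 by simp
  have tz: "(Cmp C q r, s) \<in> gT C U"
    using pq rs rs2 fu by (intro gT_I) simp_all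
  let ?x = "gclass C U (Cmp C q r, s)"
  have xc: "?x \<in> gT C U // gE C U" by (rule class_in[OF tz])
  have px: "phi C S FU ?x = gclass C S (Cmp C FU (Cmp C q r), Cmp C FU s)"
    by (rule phi_rep[OF xc class_self[OF tz]])
  have o: "Dom C r \<in> Obj C" by (rule cat_dom_obj(1)[OF cat rs(1)])
  note ii = cat_id[OF cat o]
  have i1: "Cmp C FU (Cmp C q r) = Cmp C e1 (Cmp C p r)"
  proof -
    have "Cmp C FU (Cmp C q r) = Cmp C (Cmp C FU q) r" using pq rs rs2 fu by simp
    also have "\<dots> = Cmp C (Cmp C e1 p) r" using pq(7) by simp
    also have "\<dots> = Cmp C e1 (Cmp C p r)" using pq(1-6) rs rs2 t by simp
    finally show ?thesis .
  qed
  have i2: "Cmp C FU s = Cmp C e2 (Cmp C p r)" using rs(7) pq rs rs2 t by simp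
  have "((Cmp C FU (Cmp C q r), Cmp C FU s), (e1, e2)) \<in> gR C S"
    apply (rule gR_I[where h="Id C (Dom C r)" and k="Cmp C p r", OF FU_T[OF tz] te])
    using ii i1 i2 pq rs rs2 t fu cat_idr[OF cat, of "Cmp C FU (Cmp C q r)"] cat_idr[OF cat, of "Cmp C FU s"]
    by simp_all
  then have "phi C S FU ?x = w"
    using px class_eq_rep[OF w e] gclass_eq[OF gR_gE] by metis
  then show ?thesis using xc by blast
qed

end

theorem proposition3p9:
  fixes C :: "('o, 'm) cat" and Cov :: "'o \<Rightarrow> 'm set set"
    and S U :: 'o and F F' :: "'o \<Rightarrow> 'm"
  assumes asm: "assembler C Cov"
    and sink: "is_sink C S"
    and Ep: "cond_Ep C Cov"
    and D: "cond_D C"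
    and U: "U \<in> Obj C" "\<not> initial C U"
    and F: "\<forall>A\<in>Obj C. F A \<in> homs C A S" "F S = Id C S"
    and F': "\<forall>A\<in>Obj (full_sub C U). F' A \<in> homs (full_sub C U) A U" "F' U = Id C U"
    and compat: "\<forall>A\<in>Obj (full_sub C U). F A = Cmp C (F U) (F' A)"
  shows "\<exists>\<phi>. \<phi> \<in> iso (group_of (full_sub C U) U) (group_of C S) \<and>
           (\<forall>A\<in>Obj (full_sub C U). pi_ob C A = pi_ob (full_sub C U) A) \<and>
           (\<forall>g\<in>Arr (full_sub C U). pi_mor C S F g = sg_map \<phi> (pi_mor (full_sub C U) U F' g))"
proof -
  have cat: "category C" and mon: "\<forall>f\<in>Arr C. mono C f" and exE: "\<exists>E. initial C E"
    using asm unfolding assembler_def by auto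
  obtain E where E: "initial C E" using exE by blast
  have ore: "ore C" by (rule ore_from_D[OF cat E D])
  have FU: "F U \<in> homs C U S" using F(1) U(1) by blast
  have fu: "F U \<in> Arr C" "Dom C (F U) = U" "Cod C (F U) = S" using FU unfolding homs_def by auto
  interpret phix C U E S "F U"
    by unfold_locales (use cat mon ore U E fu in auto)
  let ?phi = "phi C S (F U)"
  have carrD: "carrier (group_of (full_sub C U) U) = gT C U // gE C U"
    unfolding group_of_def gT_fs gE_fs by simp
  have carrC: "carrier (group_of C S) = gT C S // gE C S"
    unfolding group_of_def by simp
  have iso: "?phi \<in> iso (group_of (full_sub C U) U) (group_of C S)"
    unfolding iso_def
  proof (intro CollectI conjI)
    show "?phi \<in> hom (group_of (full_sub C U) U) (group_of C S)"
      unfolding hom_def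
    proof (intro CollectI conjI)
      show "?phi \<in> carrier (group_of (full_sub C U) U) \<rightarrow> carrier (group_of C S)"
        unfolding carrD carrC using phi_carrier by blast
      show "\<forall>x\<in>carrier (group_of (full_sub C U) U). \<forall>y\<in>carrier (group_of (full_sub C U) U).
          ?phi (x \<otimes>\<^bsub>group_of (full_sub C U) U\<^esub> y) = ?phi x \<otimes>\<^bsub>group_of C S\<^esub> ?phi y"
        unfolding carrD by (simp add: group_of_def phi_hom)
    qed
    show "bij_betw ?phi (carrier (group_of (full_sub C U) U)) (carrier (group_of C S))"
      unfolding carrD carrC bij_betw_def
    proof
      show "inj_on ?phi (gT C U // gE C U)" unfolding inj_on_def using phi_inj by blast
      show "?phi ` (gT C U // gE C U) = gT C S // gE C S"
        using phi_carrier phi_surj by blast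
    qed
  qed
  have obs: "\<forall>A\<in>Obj (full_sub C U). pi_ob C A = pi_ob (full_sub C U) A"
    unfolding pi_ob_def using init_fs by simp
  have mors: "\<forall>g\<in>Arr (full_sub C U). pi_mor C S F g = sg_map ?phi (pi_mor (full_sub C U) U F' g)"
  proof
    fix g assume g: "g \<in> Arr (full_sub C U)"
    have gC: "g \<in> Arr C" using g unfolding fs_Arr by simp
    let ?A = "Dom C g" and ?B = "Cod C g"
    have A: "?A \<in> Obj (full_sub C U)" using g cat_dom_obj[OF cat gC] unfolding fs_Arr fs_Obj by simp
    have B: "?B \<in> Obj (full_sub C U)" using g cat_dom_obj[OF cat gC] unfolding fs_Arr fs_Obj by simp
    have iA: "initial (full_sub C U) ?A \<longleftrightarrow> initial C ?A" by (rule init_fs[OF A])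
    have iB: "initial (full_sub C U) ?B \<longleftrightarrow> initial C ?B" by (rule init_fs[OF B])
    show "pi_mor C S F g = sg_map ?phi (pi_mor (full_sub C U) U F' g)"
    proof (cases "initial C ?A")
      case True
      then show ?thesis unfolding pi_mor_def sg_map_def using iA iB by simp
    next
      case False
      have fA: "F' ?A \<in> Arr C" "Dom C (F' ?A) = ?A" "Cod C (F' ?A) = U"
        using F'(1) A unfolding homs_def fs_Arr by auto
      have fB: "F' ?B \<in> Arr C" "Dom C (F' ?B) = ?B" "Cod C (F' ?B) = U"
        using F'(1) B unfolding homs_def fs_Arr by auto
      have T: "(F' ?A, Cmp C (F' ?B) g) \<in> gT C U"
        using fA fB gC False by (intro gT_I) simp_all
      have "?phi (gclass C U (F' ?A, Cmp C (F' ?B) g))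
          = gclass C S (Cmp C (F U) (F' ?A), Cmp C (F U) (Cmp C (F' ?B) g))"
        by (rule phi_rep[OF class_in[OF T] class_self[OF T]])
      also have "\<dots> = gclass C S (F ?A, Cmp C (F ?B) g)"
        using compat A B fA fB gC fu by simp
      finally show ?thesis unfolding pi_mor_def sg_map_def using iA False gclass_fs by simp
    qed
  qed
  show ?thesis using iso obs mors by blast
qed

end
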